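(* Let $A=P+\Xi$ be real $m\times n$ matrices and let $J$ be a rectangular index set. Denote by $(\hat u,\hat v)$ and $(u,v)$ the pairs of (unit) singular vectors of $\Pi_J(A)$ and $\Pi_J(P)$, respectively, corresponding to their largest singular values. Then $$\|\Pi_{u,v}(\Pi_J(P))-P\|_F\le\|\Pi_{\hat u,\hat v}(\Pi_J(P))-P\|_F\le\|\Pi_{\hat u,\hat v}(\Pi_J(A))-P\|_F .$$
   Context: For unit vectors $u,v$ and a matrix $X$, $\Pi_{u,v}(X)=(uu^T)X(vv^T)$. A rectangular index set is $J=J_1\times J_2$ with $J_1$ a set of row indices and $J_2$ a set of column indices; $\Pi_J(X)$ is the matrix that agrees with $X$ on $J$ and is zero outside $J$. *)

theory Defs
  imports "HOL-Analysis.Analysis"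
begin

text \<open>Real m x n matrices are rendered as real^'n^'m (rows indexed by 'm, columns by 'n).\<close>

definition frob_norm :: "real^'n^'m \<Rightarrow> real" where
  "frob_norm X = sqrt (\<Sum>i\<in>UNIV. \<Sum>j\<in>UNIV. (X$i$j)^2)"

definition outer :: "real^'m \<Rightarrow> real^'n \<Rightarrow> real^'n^'m" where
  "outer u w = (\<chi> i j. u$i * w$j)"

definition proj_uv :: "real^'m \<Rightarrow> real^'n \<Rightarrow> real^'n^'m \<Rightarrow> real^'n^'m" where
  "proj_uv u v X = outer u u ** X ** outer v v"

definition proj_J :: "'m set \<Rightarrow> 'n set \<Rightarrow> real^'n^'m \<Rightarrow> real^'n^'m" where
  "proj_J J1 J2 X = (\<chi> i j. if i \<in> J1 \<and> j \<in> J2 then X$i$j else 0)"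

text \<open>Largest singular value = operator (spectral) norm.\<close>
definition max_sing_val :: "real^'n^'m \<Rightarrow> real" where
  "max_sing_val M = onorm (\<lambda>x. M *v x)"

definition top_sing_pair :: "real^'n^'m \<Rightarrow> real^'m \<Rightarrow> real^'n \<Rightarrow> bool" where
  "top_sing_pair M u v \<longleftrightarrow> norm u = 1 \<and> norm v = 1 \<and>
     M *v v = max_sing_val M *\<^sub>R u \<and> transpose M *v u = max_sing_val M *\<^sub>R v"

end

theory Submission
  imports Defs
begin

lemma proj_uv_eq:
  fixes x :: "real^'m" and y :: "real^'n" and M :: "real^'n^'m"
  shows "proj_uv x y M = (x \<bullet> (M *v y)) *\<^sub>R outer x y"
proof -
  have "(proj_uv x y M)$i$j = ((x \<bullet> (M *v y)) *\<^sub>R outer x y)$i$j" for i j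
  proof -
    have "(proj_uv x y M)$i$j = (\<Sum>l\<in>UNIV. (\<Sum>k\<in>UNIV. x$i * x$k * M$k$l) * (y$l * y$j))"
      by (simp add: proj_uv_def matrix_matrix_mult_def outer_def)
    also have "\<dots> = (\<Sum>l\<in>UNIV. \<Sum>k\<in>UNIV. x$i * x$k * M$k$l * y$l * y$j)"
      by (simp add: sum_distrib_right mult.assoc)
    also have "\<dots> = (\<Sum>k\<in>UNIV. \<Sum>l\<in>UNIV. x$i * x$k * M$k$l * y$l * y$j)"
      by (rule sum.swap)
    also have "\<dots> = (\<Sum>k\<in>UNIV. x$k * (\<Sum>l\<in>UNIV. M$k$l * y$l)) * (x$i * y$j)"
      by (simp add: sum_distrib_right sum_distrib_left mult_ac)
    also have "\<dots> = ((x \<bullet> (M *v y)) *\<^sub>R outer x y)$i$j"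
      by (simp add: outer_def inner_vec_def matrix_vector_mult_def)
    finally show ?thesis .
  qed
  then show ?thesis by (simp add: vec_eq_iff)
qed

lemma sumsq1:
  fixes x :: "real^'m"
  assumes "norm x = 1"
  shows "(\<Sum>i\<in>UNIV. (x$i)^2) = 1"
proof -
  have "x \<bullet> x = 1" using assms by (simp add: dot_square_norm)
  then show ?thesis by (simp add: inner_vec_def power2_eq_square)
qed

lemma frob_sq:
  fixes x :: "real^'m" and y :: "real^'n" and P :: "real^'n^'m"
  assumes "norm x = 1" "norm y = 1"
  shows "(frob_norm (c *\<^sub>R outer x y - P))^2
     = c^2 - 2 * c * (x \<bullet> (P *v y)) + (\<Sum>i\<in>UNIV. \<Sum>j\<in>UNIV. (P$i$j)^2)"
proof -
  have "(frob_norm (c *\<^sub>R outer x y - P))^2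
      = (\<Sum>i\<in>UNIV. \<Sum>j\<in>UNIV. (c * x$i * y$j - P$i$j)^2)"
    unfolding frob_norm_def
    by (subst real_sqrt_pow2) (auto intro!: sum_nonneg simp: outer_def mult.assoc)
  also have "\<dots> = (\<Sum>i\<in>UNIV. \<Sum>j\<in>UNIV. c^2 * (x$i)^2 * (y$j)^2
       - 2 * c * (x$i * (P$i$j * y$j)) + (P$i$j)^2)"
    by (intro sum.cong refl) (simp add: power2_eq_square algebra_simps)
  also have "\<dots> = c^2 * (\<Sum>i\<in>UNIV. (x$i)^2) * (\<Sum>j\<in>UNIV. (y$j)^2)
      - 2 * c * (\<Sum>i\<in>UNIV. x$i * (\<Sum>j\<in>UNIV. P$i$j * y$j))
      + (\<Sum>i\<in>UNIV. \<Sum>j\<in>UNIV. (P$i$j)^2)"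
  proof -
    have t1: "(\<Sum>i\<in>UNIV. \<Sum>j\<in>UNIV. c^2 * (x$i)^2 * (y$j)^2) = c^2 * (\<Sum>i\<in>UNIV. (x$i)^2) * (\<Sum>j\<in>UNIV. (y$j)^2)"
    proof -
      have "(\<Sum>i\<in>UNIV. \<Sum>j\<in>UNIV. c^2 * (x$i)^2 * (y$j)^2) = (\<Sum>i\<in>UNIV. c^2 * (x$i)^2 * (\<Sum>j\<in>UNIV. (y$j)^2))"
        by (simp only: sum_distrib_left)
      also have "\<dots> = (\<Sum>i\<in>UNIV. c^2 * (x$i)^2) * (\<Sum>j\<in>UNIV. (y$j)^2)"
        by (simp only: sum_distrib_right)
      also have "\<dots> = c^2 * (\<Sum>i\<in>UNIV. (x$i)^2) * (\<Sum>j\<in>UNIV. (y$j)^2)"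
        by (simp only: sum_distrib_left)
      finally show ?thesis .
    qed
    have t2: "(\<Sum>i\<in>UNIV. \<Sum>j\<in>UNIV. 2 * c * (x$i * (P$i$j * y$j))) = 2 * c * (\<Sum>i\<in>UNIV. x$i * (\<Sum>j\<in>UNIV. P$i$j * y$j))"
      by (simp add: sum_distrib_left)
    show ?thesis by (simp only: sum.distrib sum_subtractf t1 t2)
  qed
  also have "\<dots> = c^2 - 2 * c * (x \<bullet> (P *v y)) + (\<Sum>i\<in>UNIV. \<Sum>j\<in>UNIV. (P$i$j)^2)"
    using assms by (simp add: sumsq1 inner_vec_def matrix_vector_mult_def)
  finally show ?thesis .
qed

lemma inner_projJ:
  fixes x :: "real^'m" and y :: "real^'n" and P :: "real^'n^'m"
  assumes "\<forall>i. i \<notin> J1 \<longrightarrow> x$i = 0" "\<forall>j. j \<notin> J2 \<longrightarrow> y$j = 0"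
  shows "x \<bullet> (proj_J J1 J2 P *v y) = x \<bullet> (P *v y)"
proof -
  have "x$i * (\<Sum>j\<in>UNIV. (proj_J J1 J2 P)$i$j * y$j) = x$i * (\<Sum>j\<in>UNIV. P$i$j * y$j)" for i
    using assms by (cases "i \<in> J1") (auto simp: proj_J_def intro!: sum.cong)
  then have "(\<Sum>i\<in>UNIV. x$i * (\<Sum>j\<in>UNIV. (proj_J J1 J2 P)$i$j * y$j))
     = (\<Sum>i\<in>UNIV. x$i * (\<Sum>j\<in>UNIV. P$i$j * y$j))" by (rule sum.cong[OF refl])
  then show ?thesis by (simp add: inner_vec_def matrix_vector_mult_def)
qed

theorem lemma6:
  fixes P Xi A :: "real^'n^'m" and J1 :: "'m set" and J2 :: "'n set"
    and u uh :: "real^'m" and v vh :: "real^'n"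
  assumes "A = P + Xi"
    and "top_sing_pair (proj_J J1 J2 A) uh vh"
    and "top_sing_pair (proj_J J1 J2 P) u v"
    and "\<forall>i. i \<notin> J1 \<longrightarrow> uh$i = 0" and "\<forall>j. j \<notin> J2 \<longrightarrow> vh$j = 0"
    and "\<forall>i. i \<notin> J1 \<longrightarrow> u$i = 0" and "\<forall>j. j \<notin> J2 \<longrightarrow> v$j = 0"
  shows "frob_norm (proj_uv u v (proj_J J1 J2 P) - P)
           \<le> frob_norm (proj_uv uh vh (proj_J J1 J2 P) - P)
       \<and> frob_norm (proj_uv uh vh (proj_J J1 J2 P) - P)
           \<le> frob_norm (proj_uv uh vh (proj_J J1 J2 A) - P)"
proof -
  let ?Q = "proj_J J1 J2 P"
  define F where "F = (\<Sum>i\<in>UNIV. \<Sum>j\<in>UNIV. (P$i$j)^2)"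
  define s where "s = max_sing_val ?Q"
  define a where "a = uh \<bullet> (?Q *v vh)"
  define b where "b = uh \<bullet> (proj_J J1 J2 A *v vh)"
  have nu: "norm u = 1" "norm v = 1" and Qv: "?Q *v v = s *\<^sub>R u"
    using assms(3) by (auto simp: top_sing_pair_def s_def)
  have nuh: "norm uh = 1" "norm vh = 1"
    using assms(2) by (auto simp: top_sing_pair_def)
  have s_uv: "u \<bullet> (?Q *v v) = s"
    using nu by (simp add: Qv dot_square_norm)
  have a_P: "uh \<bullet> (P *v vh) = a"
    unfolding a_def using inner_projJ[OF assms(4,5)] by simp
  have s_P: "u \<bullet> (P *v v) = s"
    using s_uv inner_projJ[OF assms(6,7)] by simp
  have "\<bar>a\<bar> \<le> norm uh * norm (?Q *v vh)"
    unfolding a_def by (rule Cauchy_Schwarz_ineq2)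
  also have "\<dots> = norm (?Q *v vh)" using nuh by simp
  also have "\<dots> \<le> onorm (\<lambda>x. ?Q *v x) * norm vh"
    by (rule onorm) simp
  also have "\<dots> = s" using nuh by (simp add: s_def max_sing_val_def)
  finally have as: "\<bar>a\<bar> \<le> s" .
  have e1: "(frob_norm (proj_uv u v ?Q - P))^2 = F - s^2"
    using frob_sq[OF nu, of s P] s_uv s_P by (simp add: proj_uv_eq F_def power2_eq_square)
  have e2: "(frob_norm (proj_uv uh vh ?Q - P))^2 = F - a^2"
    using frob_sq[OF nuh, of a P] a_P by (simp add: proj_uv_eq F_def a_def[symmetric] power2_eq_square)
  have e3: "(frob_norm (proj_uv uh vh (proj_J J1 J2 A) - P))^2 = b^2 - 2*b*a + F"
    using frob_sq[OF nuh, of b P] a_P by (simp add: proj_uv_eq F_def b_def[symmetric])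
  have i1: "(frob_norm (proj_uv u v ?Q - P))^2 \<le> (frob_norm (proj_uv uh vh ?Q - P))^2"
    unfolding e1 e2 using as abs_le_square_iff[of a s] by simp
  have i2: "(frob_norm (proj_uv uh vh ?Q - P))^2 \<le> (frob_norm (proj_uv uh vh (proj_J J1 J2 A) - P))^2"
    unfolding e2 e3 using sum_squares_ge_zero[of "b - a" 0]
    by (simp add: power2_eq_square algebra_simps)
  have fn: "frob_norm X \<ge> 0" for X :: "real^'n^'m" by (simp add: frob_norm_def sum_nonneg)
  show ?thesis using i1 i2 fn by (meson power2_le_imp_le)
qed

end
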